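(* There is an absolute constant $C$ such that the following holds. Let $G=(V,E)$ be an undirected unweighted graph on $n$ vertices, let $D\ge1$ be an integer, and let $\chi:V\to[1,D^3]$ be any coloring. For vertices $u,v$ let $H_{uv}=\{x\in V:\mathrm{dist}(u,x)+\mathrm{dist}(x,v)=\mathrm{dist}(u,v)\}$. For integers $a,b\ge0$ with $1\le a+b\le D$ and $h\in V$, let $E^h_{a,b}$ be the edge set of the bipartite graph with two copies of $V$ as sides, where $(u,v)\in E^h_{a,b}$ ($u$ in the left copy, $v$ in the right copy) iff (i) $|H_{uv}|\le D$, (ii) the vertices of $H_{uv}$ receive pairwise distinct colors under $\chi$, and (iii) $h\in H_{uv}$, $\mathrm{dist}(u,h)=a$ and $\mathrm{dist}(h,v)=b$. For each such $(a,b,h)$ fix a minimum vertex cover $(V^{h}_{1,a,b},V^{h}_{2,a,b})$ of this bipartite graph ($V^h_{1,a,b}$ in the left copy, $V^h_{2,a,b}$ in the right copy), and define for each $v\in V$ the set $F_v$ of all $h\in V$ such that $v\in V^h_{1,a,b}\cup V^h_{2,a,b}$ for some $a,b$ with $1\le a+b\le D$. Then $$\sum_{v\in V}|F_v|\le C\,D^5\,\frac{n^2}{\mathsf{RS}(n)}.$$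
   Context: A matching $M$ in a graph is induced if there is a vertex subset $V'$ such that $M$ is exactly the edge set of the subgraph induced by $V'$. A Ruzsa–Szemerédi graph is an undirected unweighted graph on $n$ vertices whose edges can be partitioned into at most $n$ induced matchings; $\mathsf{RS}(n)$ is the largest value such that every Ruzsa–Szemerédi graph on $n$ vertices has at most $n^2/\mathsf{RS}(n)$ edges. *)

theory Defs
  imports Main "HOL-Library.Extended_Nat"
begin

definition simple_graph :: "'a set \<Rightarrow> 'a set set \<Rightarrow> bool" where
  "simple_graph V E \<longleftrightarrow> finite V \<and> E \<subseteq> {{x, y} | x y. x \<in> V \<and> y \<in> V \<and> x \<noteq> y}"

definition walk :: "'a set set \<Rightarrow> 'a list \<Rightarrow> bool" where
  "walk E xs \<longleftrightarrow> xs \<noteq> [] \<and> (\<forall>i. Suc i < length xs \<longrightarrow> {xs ! i, xs ! Suc i} \<in> E)"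

text \<open>Shortest-path distance; infinite if no path exists.\<close>
definition dist :: "'a set set \<Rightarrow> 'a \<Rightarrow> 'a \<Rightarrow> enat" where
  "dist E u v = (INF xs \<in> {xs. walk E xs \<and> hd xs = u \<and> last xs = v}. enat (length xs - 1))"

definition Hset :: "'a set \<Rightarrow> 'a set set \<Rightarrow> 'a \<Rightarrow> 'a \<Rightarrow> 'a set" where
  "Hset V E u v = {x \<in> V. dist E u x + dist E x v = dist E u v}"

text \<open>Edge set of the bipartite graph E^h_{a,b}: pairs (left u, right v).\<close>
definition Eab :: "'a set \<Rightarrow> 'a set set \<Rightarrow> nat \<Rightarrow> ('a \<Rightarrow> nat) \<Rightarrow> nat \<Rightarrow> nat \<Rightarrow> 'a \<Rightarrow> ('a \<times> 'a) set" where
  "Eab V E D \<chi> a b h = {(u, v) \<in> V \<times> V.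
      card (Hset V E u v) \<le> D \<and> inj_on \<chi> (Hset V E u v) \<and>
      h \<in> Hset V E u v \<and> dist E u h = enat a \<and> dist E h v = enat b}"

definition bip_vertex_cover :: "'a set \<Rightarrow> ('a \<times> 'a) set \<Rightarrow> 'a set \<times> 'a set \<Rightarrow> bool" where
  "bip_vertex_cover V B S \<longleftrightarrow> fst S \<subseteq> V \<and> snd S \<subseteq> V \<and>
     (\<forall>(u, v) \<in> B. u \<in> fst S \<or> v \<in> snd S)"

definition min_bip_vertex_cover :: "'a set \<Rightarrow> ('a \<times> 'a) set \<Rightarrow> 'a set \<times> 'a set \<Rightarrow> bool" where
  "min_bip_vertex_cover V B S \<longleftrightarrow> bip_vertex_cover V B S \<and>
     (\<forall>T. bip_vertex_cover V B T \<longrightarrow> card (fst S) + card (snd S) \<le> card (fst T) + card (snd T))"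

definition induced_matching :: "'a set set \<Rightarrow> 'a set set \<Rightarrow> bool" where
  "induced_matching E M \<longleftrightarrow> M \<subseteq> E \<and> (\<forall>e1 \<in> M. \<forall>e2 \<in> M. e1 \<noteq> e2 \<longrightarrow> e1 \<inter> e2 = {}) \<and>
     (\<exists>V'. M = {e \<in> E. e \<subseteq> V'})"

definition RS_graph :: "nat \<Rightarrow> nat set set \<Rightarrow> bool" where
  "RS_graph n E \<longleftrightarrow> simple_graph {..<n} E \<and>
     (\<exists>c. (\<forall>e \<in> E. c e < n) \<and> (\<forall>i < n. induced_matching E {e \<in> E. c e = i}))"

text \<open>Maximum number of edges of an RS graph on n vertices (= n^2 / RS(n)).\<close>
definition RS_max_edges :: "nat \<Rightarrow> nat" where
  "RS_max_edges n = Max {card E | E. RS_graph n E}"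

text \<open>RS(n): the largest value r with every RS graph on n vertices having at most n^2/r edges.\<close>
definition RS :: "nat \<Rightarrow> real" where
  "RS n = real (n ^ 2) / real (RS_max_edges n)"

end

theory Submission
  imports Defs
begin


definition matching :: "('a \<times> 'a) set \<Rightarrow> bool" where
  "matching M \<longleftrightarrow> (\<forall>u v u' v'. (u,v)\<in>M \<longrightarrow> (u',v')\<in>M \<longrightarrow> (u=u' \<or> v=v') \<longrightarrow> u=u' \<and> v=v')"

lemma piece:
  fixes V :: "nat set" and Mh :: "nat \<Rightarrow> (nat\<times>nat) set" and idx :: "nat \<Rightarrow> nat"
  assumes fin: "finite V"
  and sub: "\<forall>h\<in>V. Mh h \<subseteq> {(u,v). u\<in>V \<and> v\<in>V \<and> u\<noteq>v}"
  and match: "\<forall>h\<in>V. matching (Mh h)"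
  and ind: "\<forall>h\<in>V. \<forall>h'\<in>V. \<forall>u v v1 u2. (u,v1)\<in>Mh h \<longrightarrow> (u2,v)\<in>Mh h \<longrightarrow> (u,v)\<in>Mh h' \<longrightarrow> h=h'"
  and bij: "bij_betw idx V {..<card V}"
  and m: "1 \<le> m" "2*m \<le> card V"
  shows "(\<Sum>h\<in>V. card (Mh h \<inter> {(u,v). idx u div m = k \<and> idx v div m = l})) \<le> RS_max_edges (card V)"
proof -
  define n where "n = card V"
  define P where "P = {(u,v). idx u div m = k \<and> idx v div m = l}"
  define L where "L u = idx u mod m" for u
  define R where "R v = m + idx v mod m" for v
  define emb where "emb p = {L (fst p), R (snd p)}" for p
  define N where "N h = Mh h \<inter> P" for h
  define U where "U = (\<Union>h\<in>V. N h)"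
  define E' where "E' = emb ` U"
  have idxlt: "idx u < n" if "u \<in> V" for u using bij that unfolding n_def bij_betw_def by auto
  have injidx: "inj_on idx V" using bij bij_betw_def by blast
  have Llt: "L u < m" for u using m unfolding L_def by simp
  have Rge: "m \<le> R v" "R v < n" for v
  proof -
    have lt: "idx v mod m < m" using m by simp
    show "m \<le> R v" unfolding R_def by simp
    show "R v < n" using m lt unfolding R_def n_def by linarith
  qed
  have LneR: "L u \<noteq> R v" for u v using Llt[of u] Rge(1)[of v] by simp
  have NV: "N h \<subseteq> {(u,v). u\<in>V \<and> v\<in>V \<and> u\<noteq>v}" if "h \<in> V" for h
    using sub that unfolding N_def by blast
  have NP: "N h \<subseteq> P" for h unfolding N_def by blast
  have F1: "u = u'" if "u \<in> V" "u' \<in> V" "idx u div m = k" "idx u' div m = k" "L u = L u'" for u u'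
  proof -
    have "idx u = idx u'" using that unfolding L_def by (metis div_mult_mod_eq)
    then show ?thesis using injidx that inj_on_def by metis
  qed
  have F2: "v = v'" if "v \<in> V" "v' \<in> V" "idx v div m = l" "idx v' div m = l" "R v = R v'" for v v'
  proof -
    have "idx v = idx v'" using that unfolding R_def by (metis add_left_cancel div_mult_mod_eq)
    then show ?thesis using injidx that inj_on_def by metis
  qed
  have inU: "u \<in> V \<and> v \<in> V \<and> u \<noteq> v \<and> idx u div m = k \<and> idx v div m = l" if "(u,v) \<in> U" for u v
    using that NV NP unfolding U_def P_def by blast
  have F4: "p = p'" if "p \<in> U" "p' \<in> U" "emb p = emb p'" for p p'
  proof -
    obtain u v u' v' where pp: "p = (u,v)" "p' = (u',v')" by force
    have "L u = L u' \<and> R v = R v'" using that(3) LneR unfolding pp emb_def by (auto simp: doubleton_eq_iff)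
    then show ?thesis using F1 F2 inU that(1,2) unfolding pp by metis
  qed
  have disj: "N h \<inter> N h' = {}" if "h \<in> V" "h' \<in> V" "h \<noteq> h'" for h h'
  proof (rule ccontr)
    assume "N h \<inter> N h' \<noteq> {}"
    then obtain u v where "(u,v) \<in> N h" "(u,v) \<in> N h'" by auto
    then show False using ind that unfolding N_def by blast
  qed
  have finN: "finite (N h)" if "h \<in> V" for h
    by (rule finite_subset[OF NV[OF that]]) (use fin in \<open>auto intro: finite_subset[of _ "V \<times> V"]\<close>)
  have cardE: "card E' = (\<Sum>h\<in>V. card (N h))"
  proof -
    have "inj_on emb U" using F4 inj_on_def by blast
    then have "card E' = card U" unfolding E'_def by (simp add: card_image)
    also have "\<dots> = (\<Sum>h\<in>V. card (N h))" unfolding U_def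
      by (rule card_UN_disjoint) (use fin finN disj in auto)
    finally show ?thesis .
  qed
  define lab where "lab e = idx (SOME h. h \<in> V \<and> e \<in> emb ` N h)" for e
  have labeq: "lab e = idx h" if "h \<in> V" "e \<in> emb ` N h" for e h
  proof -
    note hyp = that
    have ex: "\<exists>h. h \<in> V \<and> e \<in> emb ` N h" using that by blast
    define h' where "h' = (SOME h. h \<in> V \<and> e \<in> emb ` N h)"
    have h': "h' \<in> V" "e \<in> emb ` N h'" using someI_ex[OF ex] unfolding h'_def by auto
    obtain p where p: "p \<in> N h" "e = emb p" using hyp by blast
    obtain p' where p': "p' \<in> N h'" "e = emb p'" using h' by blast
    have "p = p'" using F4[of p p'] p p' hyp(1) h'(1) unfolding U_def by blast
    then have "h = h'" using disj[of h h'] p p' hyp(1) h'(1) by blast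
    then show ?thesis unfolding lab_def h'_def by simp
  qed
  have cls: "{e \<in> E'. lab e = idx h} = emb ` N h" if "h \<in> V" for h
  proof
    show "emb ` N h \<subseteq> {e \<in> E'. lab e = idx h}" using labeq that unfolding E'_def U_def by blast
    show "{e \<in> E'. lab e = idx h} \<subseteq> emb ` N h"
    proof
      fix e assume "e \<in> {e \<in> E'. lab e = idx h}"
      then obtain h'' where h'': "h'' \<in> V" "e \<in> emb ` N h''" "lab e = idx h" unfolding E'_def U_def by blast
      then have "idx h'' = idx h" using labeq by metis
      then have "h'' = h" using injidx h''(1) that inj_on_def by metis
      then show "e \<in> emb ` N h" using h'' by simp
    qed
  qed
  have indm: "induced_matching E' (emb ` N h)" if "h \<in> V" for h
    unfolding induced_matching_def
  proof (intro conjI)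
    show "emb ` N h \<subseteq> E'" unfolding E'_def U_def using that by blast
    show "\<forall>e1\<in>emb ` N h. \<forall>e2\<in>emb ` N h. e1 \<noteq> e2 \<longrightarrow> e1 \<inter> e2 = {}"
    proof (intro ballI impI)
      fix e1 e2 assume e: "e1 \<in> emb ` N h" "e2 \<in> emb ` N h" "e1 \<noteq> e2"
      then obtain u v u' v' where uv: "(u,v) \<in> N h" "(u',v') \<in> N h" "e1 = emb (u,v)" "e2 = emb (u',v')"
        by auto
      have U1: "(u,v) \<in> U" "(u',v') \<in> U" using uv that unfolding U_def by auto
      have mm: "matching (Mh h)" using match that by blast
      have Mm: "(u,v) \<in> Mh h" "(u',v') \<in> Mh h" using uv unfolding N_def by auto
      show "e1 \<inter> e2 = {}"
      proof (rule ccontr)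
        assume "e1 \<inter> e2 \<noteq> {}"
        then have "L u = L u' \<or> R v = R v'" using LneR unfolding uv emb_def by auto
        then have "u = u' \<or> v = v'" using F1 F2 inU[OF U1(1)] inU[OF U1(2)] by metis
        then have "u = u' \<and> v = v'" using mm Mm unfolding matching_def by blast
        then show False using e uv by simp
      qed
    qed
    show "\<exists>V'. emb ` N h = {e \<in> E'. e \<subseteq> V'}"
    proof (intro exI[of _ "\<Union>(emb ` N h)"] equalityI subsetI)
      fix e assume "e \<in> emb ` N h"
      then show "e \<in> {e \<in> E'. e \<subseteq> \<Union>(emb ` N h)}" using that unfolding E'_def U_def by blast
    next
      fix e assume e: "e \<in> {e \<in> E'. e \<subseteq> \<Union>(emb ` N h)}"
      then obtain u v h' where uv: "h' \<in> V" "(u,v) \<in> N h'" "e = emb (u,v)" unfolding E'_def U_def by auto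
      have "L u \<in> \<Union>(emb ` N h)" using e uv unfolding emb_def by auto
      then obtain u1 v1 where p1: "(u1,v1) \<in> N h" "L u = L u1" using LneR unfolding emb_def by auto
      have "R v \<in> \<Union>(emb ` N h)" using e uv unfolding emb_def by auto
      then obtain u2 v2 where p2: "(u2,v2) \<in> N h" "R v = R v2" using LneR[THEN not_sym] unfolding emb_def by fastforce
      have Uu: "(u,v) \<in> U" "(u1,v1) \<in> U" "(u2,v2) \<in> U" using uv p1 p2 that unfolding U_def by auto
      have "u = u1" using F1 inU[OF Uu(1)] inU[OF Uu(2)] p1(2) by metis
      moreover have "v = v2" using F2 inU[OF Uu(1)] inU[OF Uu(3)] p2(2) by metis
      ultimately have "h = h'" using ind that uv p1 p2 unfolding N_def by blast
      then show "e \<in> emb ` N h" using uv by simp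
    qed
  qed
  have sg: "simple_graph {..<n} E'"
    unfolding simple_graph_def
  proof (intro conjI)
    show "finite {..<n}" by simp
    show "E' \<subseteq> {{x, y} |x y. x \<in> {..<n} \<and> y \<in> {..<n} \<and> x \<noteq> y}"
    proof
      fix e assume "e \<in> E'"
      then obtain u v where "e = {L u, R v}" unfolding E'_def emb_def by auto
      moreover have "L u < n" using Llt[of u] Rge[of u] by simp
      ultimately show "e \<in> {{x, y} |x y. x \<in> {..<n} \<and> y \<in> {..<n} \<and> x \<noteq> y}"
        using LneR Rge(2) by blast
    qed
  qed
  have rs: "RS_graph n E'"
    unfolding RS_graph_def
  proof (intro conjI exI[of _ lab])
    show "simple_graph {..<n} E'" by (rule sg)
    show "\<forall>e\<in>E'. lab e < n" using labeq idxlt unfolding E'_def U_def by fastforce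
    show "\<forall>i<n. induced_matching E' {e \<in> E'. lab e = i}"
    proof (intro allI impI)
      fix i assume "i < n"
      then have "i \<in> idx ` V" using bij unfolding bij_betw_def n_def by simp
      then obtain h where h: "h \<in> V" "idx h = i" by blast
      show "induced_matching E' {e \<in> E'. lab e = i}" using cls[OF h(1)] indm[OF h(1)] h(2) by simp
    qed
  qed
  have finS: "finite {card E |E. RS_graph n E}"
  proof -
    have "{card E |E. RS_graph n E} \<subseteq> card ` Pow (Pow {..<n})"
      unfolding RS_graph_def simple_graph_def by blast
    then show ?thesis by (rule finite_subset) simp
  qed
  have "card E' \<le> RS_max_edges n" unfolding RS_max_edges_def
    by (rule Max_ge[OF finS]) (use rs in blast)
  then show ?thesis using cardE unfolding N_def P_def n_def by simp
qed



lemma core: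
  fixes V :: "nat set" and Mh :: "nat \<Rightarrow> (nat\<times>nat) set"
  assumes fin: "finite V"
  and sub: "\<forall>h\<in>V. Mh h \<subseteq> {(u,v). u\<in>V \<and> v\<in>V \<and> u\<noteq>v}"
  and match: "\<forall>h\<in>V. matching (Mh h)"
  and ind: "\<forall>h\<in>V. \<forall>h'\<in>V. \<forall>u v v1 u2. (u,v1)\<in>Mh h \<longrightarrow> (u2,v)\<in>Mh h \<longrightarrow> (u,v)\<in>Mh h' \<longrightarrow> h=h'"
  shows "(\<Sum>h\<in>V. card (Mh h)) \<le> 9 * RS_max_edges (card V)"
proof (cases "card V < 2")
  case True
  then have "\<forall>a\<in>V. \<forall>b\<in>V. a = b" using card_le_Suc0_iff_eq[OF fin] by simp
  then have "\<forall>h\<in>V. Mh h = {}" using sub by fast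
  then show ?thesis by simp
next
  case False
  define n where "n = card V"
  define m where "m = n div 2"
  have m: "1 \<le> m" "2*m \<le> card V" using False unfolding m_def n_def by auto
  have n3: "n \<le> 3 * m" using False unfolding m_def n_def by linarith
  obtain idx where bij0: "bij_betw idx V {0..<card V}" using ex_bij_betw_finite_nat[OF fin] by blast
  have bij: "bij_betw idx V {..<card V}" using bij0 by (simp add: atLeast0LessThan)
  define P where "P k l = {(u,v). idx u div m = k \<and> idx v div m = l}" for k l
  have pc: "(\<Sum>h\<in>V. card (Mh h \<inter> P k l)) \<le> RS_max_edges (card V)" for k l
    unfolding P_def by (rule piece[OF fin sub match ind bij m])
  have each: "card (Mh h) \<le> (\<Sum>k<3. \<Sum>l<3. card (Mh h \<inter> P k l))" if "h \<in> V" for h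
  proof -
    have lt3: "idx u div m < 3" if "u \<in> V" for u
    proof -
      have "idx u < n" using bij that unfolding n_def bij_betw_def by auto
      then have "idx u < m * 3" using n3 by simp
      then show ?thesis by (simp add: less_mult_imp_div_less)
    qed
    have "Mh h \<subseteq> (\<Union>k<3. \<Union>l<3. Mh h \<inter> P k l)"
    proof
      fix p assume p: "p \<in> Mh h"
      obtain u v where uv: "p = (u,v)" by force
      have "u \<in> V" "v \<in> V" using sub that p uv by auto
      then have "p \<in> Mh h \<inter> P (idx u div m) (idx v div m)" using p uv unfolding P_def by simp
      then show "p \<in> (\<Union>k<3. \<Union>l<3. Mh h \<inter> P k l)" using lt3 \<open>u\<in>V\<close> \<open>v\<in>V\<close> by blast
    qed
    moreover have "finite (Mh h)"
      by (rule finite_subset[of _ "V \<times> V"]) (use sub that fin in auto)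
    ultimately have "card (Mh h) \<le> card (\<Union>k<3. \<Union>l<3. Mh h \<inter> P k l)"
      by (intro card_mono) (auto)
    also have "\<dots> \<le> (\<Sum>k<3. card (\<Union>l<3. Mh h \<inter> P k l))" by (rule card_UN_le) simp
    also have "\<dots> \<le> (\<Sum>k<3. \<Sum>l<3. card (Mh h \<inter> P k l))"
      by (intro sum_mono card_UN_le) simp
    finally show ?thesis .
  qed
  have "(\<Sum>h\<in>V. card (Mh h)) \<le> (\<Sum>h\<in>V. \<Sum>k<3. \<Sum>l<3. card (Mh h \<inter> P k l))"
    by (rule sum_mono) (rule each)
  also have "\<dots> = (\<Sum>k<3. \<Sum>h\<in>V. \<Sum>l<3. card (Mh h \<inter> P k l))"
    by (rule sum.swap)
  also have "\<dots> = (\<Sum>k<3. \<Sum>l<3. \<Sum>h\<in>V. card (Mh h \<inter> P k l))"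
    by (rule sum.cong[OF refl], rule sum.swap)
  also have "\<dots> \<le> (\<Sum>k<(3::nat). \<Sum>l<(3::nat). RS_max_edges (card V))"
    by (intro sum_mono pc)
  also have "\<dots> = 9 * RS_max_edges (card V)" by simp
  finally show ?thesis .
qed

lemma maxmatch:
  assumes "finite B"
  shows "\<exists>M \<subseteq> B. matching M \<and> (\<forall>(u,v)\<in>B. \<exists>(u',v')\<in>M. u' = u \<or> v' = v)"
proof -
  define A where "A = {M. M \<subseteq> B \<and> matching M}"
  have "finite A" unfolding A_def using assms by simp
  moreover have "{} \<in> A" unfolding A_def matching_def by simp
  ultimately obtain M where M: "M \<in> A" "\<forall>b\<in>A. M \<le> b \<longrightarrow> M = b"
    using finite_has_maximal by blast
  have "\<forall>(u,v)\<in>B. \<exists>(u',v')\<in>M. u' = u \<or> v' = v"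
  proof (rule ccontr)
    assume "\<not> ?thesis"
    then obtain u v where uv: "(u,v) \<in> B" "\<forall>(u',v')\<in>M. u' \<noteq> u \<and> v' \<noteq> v" by auto
    have "insert (u,v) M \<in> A" using M(1) uv unfolding A_def matching_def by blast
    then have "M = insert (u,v) M" using M(2) by blast
    then show False using uv by blast
  qed
  then show ?thesis using M(1) unfolding A_def by blast
qed

lemma dist_self: "dist E u u = 0"
proof -
  have "walk E [u]" unfolding walk_def by simp
  then have "dist E u u \<le> enat (length [u] - 1)" unfolding dist_def
    by (intro INF_lower) simp
  then have "dist E u u \<le> 0" by (simp add: zero_enat_def)
  then show ?thesis by simp
qed

lemma Eab_sub:
  assumes "(u,v) \<in> Eab V E D \<chi> a b h" "1 \<le> a + b"
  shows "u \<in> V \<and> v \<in> V \<and> u \<noteq> v"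
proof -
  have uv: "u \<in> V" "v \<in> V" using assms unfolding Eab_def by auto
  have "u \<noteq> v"
  proof
    assume "u = v"
    then have "dist E u h + dist E h u = 0" "dist E u h = enat a" "dist E h u = enat b"
      using assms dist_self[of E u] unfolding Eab_def Hset_def by auto
    then have "enat (a + b) = 0" by simp
    then show False using assms(2) by (simp add: zero_enat_def)
  qed
  then show ?thesis using uv by simp
qed

lemma Eab_ind:
  assumes "(u,v1) \<in> Eab V E D \<chi> a b h" "(u2,v) \<in> Eab V E D \<chi> a b h" "(u,v) \<in> Eab V E D \<chi> a b h'"
    "\<chi> h = \<chi> h'" "h \<in> V"
  shows "h = h'"
proof -
  have d1: "dist E u h = enat a" using assms(1) unfolding Eab_def by auto
  have d2: "dist E h v = enat b" using assms(2) unfolding Eab_def by auto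
  have h': "h' \<in> Hset V E u v" "inj_on \<chi> (Hset V E u v)" "dist E u h' = enat a" "dist E h' v = enat b"
    using assms(3) unfolding Eab_def by auto
  have "dist E u h' + dist E h' v = dist E u v" using h'(1) unfolding Hset_def by auto
  then have "h \<in> Hset V E u v" using d1 d2 h'(3,4) assms(5) unfolding Hset_def by auto
  then show ?thesis using h' assms(4) inj_on_def by metis
qed



theorem lemma2:
  shows "\<exists>C :: real. \<forall>(V :: nat set) (E :: nat set set) (D :: nat) (\<chi> :: nat \<Rightarrow> nat)
            (VC :: nat \<Rightarrow> nat \<Rightarrow> nat \<Rightarrow> nat set \<times> nat set).
     simple_graph V E \<longrightarrow> D \<ge> 1 \<longrightarrow> (\<forall>v \<in> V. \<chi> v \<in> {1..D ^ 3}) \<longrightarrow>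
     (\<forall>a b h. 1 \<le> a + b \<longrightarrow> a + b \<le> D \<longrightarrow> h \<in> V \<longrightarrow>
         min_bip_vertex_cover V (Eab V E D \<chi> a b h) (VC a b h)) \<longrightarrow>
     real (\<Sum>v \<in> V. card {h \<in> V. \<exists>a b. 1 \<le> a + b \<and> a + b \<le> D \<and>
                                   v \<in> fst (VC a b h) \<union> snd (VC a b h)})
       \<le> C * real D ^ 5 * (real (card V) ^ 2 / RS (card V))"
proof (intro exI[of _ 72] allI impI)
  fix V :: "nat set" and E :: "nat set set" and D :: nat and \<chi> :: "nat \<Rightarrow> nat"
    and VC :: "nat \<Rightarrow> nat \<Rightarrow> nat \<Rightarrow> nat set \<times> nat set"
  assume sg: "simple_graph V E" and D1: "D \<ge> 1" and col: "\<forall>v \<in> V. \<chi> v \<in> {1..D ^ 3}"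
    and mvc: "\<forall>a b h. 1 \<le> a + b \<longrightarrow> a + b \<le> D \<longrightarrow> h \<in> V \<longrightarrow>
         min_bip_vertex_cover V (Eab V E D \<chi> a b h) (VC a b h)"
  have fin: "finite V" using sg unfolding simple_graph_def by simp
  define n where "n = card V"
  define R where "R = RS_max_edges n"
  define T where "T = {(a,b). 1 \<le> a + b \<and> a + b \<le> (D::nat)}"
  define S where "S a b h = fst (VC a b h) \<union> snd (VC a b h)" for a b h
  have finE: "finite (Eab V E D \<chi> a b h)" for a b h
    by (rule finite_subset[of _ "V \<times> V"]) (use fin in \<open>auto simp: Eab_def\<close>)
  define Q where "Q a b h M \<longleftrightarrow> M \<subseteq> Eab V E D \<chi> a b h \<and> matching M \<and>
       (\<forall>(u,v)\<in>Eab V E D \<chi> a b h. \<exists>(u',v')\<in>M. u' = u \<or> v' = v)" for a b h M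
  define Mf where "Mf a b h = (SOME M. Q a b h M)" for a b h
  have Mf: "Mf a b h \<subseteq> Eab V E D \<chi> a b h \<and> matching (Mf a b h) \<and>
       (\<forall>(u,v)\<in>Eab V E D \<chi> a b h. \<exists>(u',v')\<in>Mf a b h. u' = u \<or> v' = v)" for a b h
  proof -
    have "\<exists>M. Q a b h M" using maxmatch[OF finE, of a b h] unfolding Q_def by blast
    then have "Q a b h (Mf a b h)" unfolding Mf_def by (rule someI_ex)
    then show ?thesis unfolding Q_def .
  qed
  have finM: "finite (Mf a b h)" for a b h using Mf[of a b h] finE[of a b h] finite_subset by blast
  have cov: "card (S a b h) \<le> 2 * card (Mf a b h) \<and> S a b h \<subseteq> V"
    if "(a,b) \<in> T" "h \<in> V" for a b h
  proof -
    have mv: "min_bip_vertex_cover V (Eab V E D \<chi> a b h) (VC a b h)"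
      using mvc that unfolding T_def by auto
    have bc: "bip_vertex_cover V (Eab V E D \<chi> a b h) (fst ` Mf a b h, snd ` Mf a b h)"
      unfolding bip_vertex_cover_def
    proof (intro conjI)
      show "fst (fst ` Mf a b h, snd ` Mf a b h) \<subseteq> V" using Mf[of a b h] by (auto simp: Eab_def)
      show "snd (fst ` Mf a b h, snd ` Mf a b h) \<subseteq> V" using Mf[of a b h] by (auto simp: Eab_def)
      show "\<forall>(u, v)\<in>Eab V E D \<chi> a b h. u \<in> fst (fst ` Mf a b h, snd ` Mf a b h) \<or>
          v \<in> snd (fst ` Mf a b h, snd ` Mf a b h)"
      proof
        fix p assume p: "p \<in> Eab V E D \<chi> a b h"
        obtain p' where p': "p' \<in> Mf a b h" "fst p' = fst p \<or> snd p' = snd p"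
          using Mf[of a b h] p by (cases p) fastforce
        show "case p of (u, v) \<Rightarrow> u \<in> fst (fst ` Mf a b h, snd ` Mf a b h) \<or>
          v \<in> snd (fst ` Mf a b h, snd ` Mf a b h)"
          using p' by (cases p) force
      qed
    qed
    have sv: "fst (VC a b h) \<subseteq> V" "snd (VC a b h) \<subseteq> V"
      using mv unfolding min_bip_vertex_cover_def bip_vertex_cover_def by auto
    have "card (fst (VC a b h)) + card (snd (VC a b h)) \<le> card (fst ` Mf a b h) + card (snd ` Mf a b h)"
      using mv bc unfolding min_bip_vertex_cover_def by fastforce
    also have "\<dots> \<le> 2 * card (Mf a b h)" using card_image_le[OF finM, of fst a b h]
        card_image_le[OF finM, of snd a b h] by simp
    finally have "card (fst (VC a b h)) + card (snd (VC a b h)) \<le> 2 * card (Mf a b h)" .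
    moreover have "card (S a b h) \<le> card (fst (VC a b h)) + card (snd (VC a b h))"
      unfolding S_def by (rule card_Un_le)
    ultimately show ?thesis using sv unfolding S_def by auto
  qed
  have hsum: "(\<Sum>h\<in>V. card (Mf a b h)) \<le> D^3 * (9 * R)" if "(a,b) \<in> T" for a b
  proof -
    have ab: "1 \<le> a + b" using that unfolding T_def by auto
    define Mh where "Mh c h = (if \<chi> h = c then Mf a b h else {})" for c h
    have one: "card (Mf a b h) = (\<Sum>c\<in>{1..D^3}. card (Mh c h))" if "h \<in> V" for h
    proof -
      have "(\<Sum>c\<in>{1..D^3}. card (Mh c h)) = (\<Sum>c\<in>{1..D^3}. if \<chi> h = c then card (Mf a b h) else 0)"
        unfolding Mh_def by (rule sum.cong) auto
      also have "\<dots> = card (Mf a b h)" using col that by (simp add: sum.delta')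
      finally show ?thesis by simp
    qed
    have cc: "(\<Sum>h\<in>V. card (Mh c h)) \<le> 9 * R" for c
      unfolding R_def n_def
    proof (rule core[OF fin])
      show "\<forall>h\<in>V. Mh c h \<subseteq> {(u, v). u \<in> V \<and> v \<in> V \<and> u \<noteq> v}"
      proof (intro ballI subsetI)
        fix h p assume h: "h \<in> V" and p: "p \<in> Mh c h"
        obtain u v where uv: "p = (u,v)" by force
        have "(u,v) \<in> Eab V E D \<chi> a b h" using p uv Mf[of a b h] unfolding Mh_def by (auto split: if_splits)
        then have "u \<in> V \<and> v \<in> V \<and> u \<noteq> v" using ab by (rule Eab_sub)
        then show "p \<in> {(u, v). u \<in> V \<and> v \<in> V \<and> u \<noteq> v}" using uv by auto
      qed
      show "\<forall>h\<in>V. matching (Mh c h)" unfolding Mh_def using Mf[of a b] by (simp add: matching_def)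
      show "\<forall>h\<in>V. \<forall>h'\<in>V. \<forall>u v v1 u2. (u, v1) \<in> Mh c h \<longrightarrow> (u2, v) \<in> Mh c h \<longrightarrow> (u, v) \<in> Mh c h' \<longrightarrow> h = h'"
      proof (intro ballI allI impI)
        fix h h' u v v1 u2 assume hh: "h \<in> V" "h' \<in> V" "(u, v1) \<in> Mh c h" "(u2, v) \<in> Mh c h" "(u, v) \<in> Mh c h'"
        then have "\<chi> h = c" "\<chi> h' = c" unfolding Mh_def by (auto split: if_splits)
        moreover have "(u, v1) \<in> Eab V E D \<chi> a b h" "(u2, v) \<in> Eab V E D \<chi> a b h" "(u, v) \<in> Eab V E D \<chi> a b h'"
          using hh Mf[of a b h] Mf[of a b h'] unfolding Mh_def by (auto split: if_splits)
        ultimately show "h = h'" using hh(1) Eab_ind[of u v1 V E D \<chi> a b h u2 v h'] by auto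
      qed
    qed
    have "(\<Sum>h\<in>V. card (Mf a b h)) = (\<Sum>h\<in>V. \<Sum>c\<in>{1..D^3}. card (Mh c h))"
      using one by (rule sum.cong[OF refl])
    also have "\<dots> = (\<Sum>c\<in>{1..D^3}. \<Sum>h\<in>V. card (Mh c h))" by (rule sum.swap)
    also have "\<dots> \<le> (\<Sum>c\<in>{1..D^3}. 9 * R)" by (intro sum_mono cc)
    also have "\<dots> = D^3 * (9 * R)" by simp
    finally show ?thesis .
  qed
  have finT: "finite T"
    by (rule finite_subset[of _ "{..D} \<times> {..D}"]) (auto simp: T_def)
  have cardT: "card T \<le> (D+1)*(D+1)"
  proof -
    have "card T \<le> card ({..D} \<times> {..D})"
      by (rule card_mono) (auto simp: T_def)
    then show ?thesis by (simp add: card_cartesian_product)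
  qed
  define X where "X = (\<Sum>v \<in> V. card {h \<in> V. \<exists>a b. 1 \<le> a + b \<and> a + b \<le> D \<and>
                                   v \<in> fst (VC a b h) \<union> snd (VC a b h)})"
  have step1: "card {h \<in> V. \<exists>a b. 1 \<le> a + b \<and> a + b \<le> D \<and> v \<in> fst (VC a b h) \<union> snd (VC a b h)}
      \<le> (\<Sum>p\<in>T. \<Sum>h\<in>V. if v \<in> S (fst p) (snd p) h then 1 else 0)" for v
  proof -
    have "{h \<in> V. \<exists>a b. 1 \<le> a + b \<and> a + b \<le> D \<and> v \<in> fst (VC a b h) \<union> snd (VC a b h)}
       = (\<Union>p\<in>T. {h\<in>V. v \<in> S (fst p) (snd p) h})" unfolding T_def S_def by (auto; blast)
    then have "card {h \<in> V. \<exists>a b. 1 \<le> a + b \<and> a + b \<le> D \<and> v \<in> fst (VC a b h) \<union> snd (VC a b h)}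
       \<le> (\<Sum>p\<in>T. card {h\<in>V. v \<in> S (fst p) (snd p) h})" using card_UN_le[OF finT] by simp
    also have "\<dots> = (\<Sum>p\<in>T. \<Sum>h\<in>V. if v \<in> S (fst p) (snd p) h then 1 else 0)"
      using fin by (simp add: sum.inter_filter[symmetric])
    finally show ?thesis .
  qed
  have "X \<le> (\<Sum>v\<in>V. \<Sum>p\<in>T. \<Sum>h\<in>V. if v \<in> S (fst p) (snd p) h then 1 else 0)"
    unfolding X_def by (intro sum_mono step1)
  also have "\<dots> = (\<Sum>p\<in>T. \<Sum>v\<in>V. \<Sum>h\<in>V. if v \<in> S (fst p) (snd p) h then 1 else 0)"
    by (rule sum.swap)
  also have "\<dots> = (\<Sum>p\<in>T. \<Sum>h\<in>V. \<Sum>v\<in>V. if v \<in> S (fst p) (snd p) h then 1 else 0)"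
    by (rule sum.cong[OF refl], rule sum.swap)
  also have "\<dots> = (\<Sum>p\<in>T. \<Sum>h\<in>V. card {v\<in>V. v \<in> S (fst p) (snd p) h})"
    using fin by (simp add: sum.inter_filter[symmetric])
  also have "\<dots> \<le> (\<Sum>p\<in>T. \<Sum>h\<in>V. 2 * card (Mf (fst p) (snd p) h))"
  proof (intro sum_mono)
    fix p h assume p: "p \<in> T" and h: "h \<in> V"
    have c: "card (S (fst p) (snd p) h) \<le> 2 * card (Mf (fst p) (snd p) h)" "S (fst p) (snd p) h \<subseteq> V"
      using cov[of "fst p" "snd p" h] p h by auto
    have "card {v\<in>V. v \<in> S (fst p) (snd p) h} \<le> card (S (fst p) (snd p) h)"
      by (rule card_mono) (use c(2) fin finite_subset in auto)
    then show "card {v\<in>V. v \<in> S (fst p) (snd p) h} \<le> 2 * card (Mf (fst p) (snd p) h)" using c(1) by linarith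
  qed
  also have "\<dots> = (\<Sum>p\<in>T. 2 * (\<Sum>h\<in>V. card (Mf (fst p) (snd p) h)))"
    by (simp add: sum_distrib_left)
  also have "\<dots> \<le> (\<Sum>p\<in>T. 2 * (D^3 * (9 * R)))"
    by (intro sum_mono mult_le_mono2) (use hsum in auto)
  also have "\<dots> = card T * (18 * D^3 * R)" by simp
  also have "\<dots> \<le> ((D+1)*(D+1)) * (18 * D^3 * R)" by (intro mult_le_mono1 cardT)
  also have "\<dots> \<le> ((2*D)*(2*D)) * (18 * D^3 * R)"
    by (intro mult_le_mono1 mult_le_mono) (use D1 in auto)
  also have "\<dots> = 72 * D^5 * R" by (simp add: power_def eval_nat_numeral algebra_simps)
  finally have XB: "X \<le> 72 * D^5 * R" .
  have RSnn: "RS n \<ge> 0" unfolding RS_def by simp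
  show "real X \<le> 72 * real D ^ 5 * (real (card V) ^ 2 / RS (card V))"
  proof (cases "X = 0")
    case True
    then show ?thesis using RSnn unfolding n_def by simp
  next
    case False
    then have Rp: "R > 0" using XB by (cases "R = 0") auto
    have "V \<noteq> {}" using False unfolding X_def by auto
    then have np: "n > 0" using fin unfolding n_def by auto
    have "real (card V) ^ 2 / RS (card V) = real R"
    proof -
      have "real (card V) ^ 2 \<noteq> 0" "real R \<noteq> 0" using Rp np unfolding n_def by auto
      then show ?thesis unfolding RS_def R_def n_def by (simp add: of_nat_power)
    qed
    moreover have "real X \<le> real (72 * D^5 * R)" using XB by (simp only: of_nat_le_iff)
    then have "real X \<le> 72 * real D ^ 5 * real R" by simp
    ultimately show ?thesis by simp
  qed
qed

end
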